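(* Let $F=\{f_i\}_{i=1}^N$ be a uniform Parseval frame for an $n$-dimensional Hilbert space $\mathcal{H}_n$ and let $p>1$. Then the canonical dual $S_F^{-1}F=F$ belongs to $\zeta_{\mathfrak{F}}^{(1),p}(F)\cap\zeta_{\mathfrak{R}}^{(1),p}(F)\cap\zeta_{\mathcal{N}}^{(1),p}(F)$, and \[\mathrm{AE}_{\mathfrak{F}}^{(1),p}(F)=\mathrm{AE}_{\mathfrak{R}}^{(1),p}(F)=\mathrm{AE}_{\mathcal{N}}^{(1),p}(F)=\frac nN.\]
   Context: A uniform Parseval frame satisfies $\sum_i|\langle f,f_i\rangle|^2=\|f\|^2$ for all $f$ and has all $\|f_i\|$ equal; its frame operator is $S_F=I$. $G=\{g_i\}$ is a dual of $F$ if $f=\sum_i\langle f,f_i\rangle g_i$ for all $f$. For a dual $G$ let $E_if=\langle f,f_i\rangle g_i$ (one-erasure error operator) and define $\mathrm{AE}_{\mathfrak{F}}^{(1),p}(F,G)=\{\frac1N\sum_i\|E_i\|_{\mathfrak{F}}^p\}^{1/p}=\{\frac1N\sum_i(\|f_i\|\|g_i\|)^p\}^{1/p}$ (Frobenius norm), $\mathrm{AE}_{\mathfrak{R}}^{(1),p}(F,G)=\{\frac1N\sum_i\rho(E_i)^p\}^{1/p}=\{\frac1N\sum_i|\langle f_i,g_i\rangle|^p\}^{1/p}$ (spectral radius), and $\mathrm{AE}_{\mathcal{N}}^{(1),p}(F,G)=\{\frac1N\sum_i\omega(E_i)^p\}^{1/p}$ with $\omega(T)=\sup_{\|f\|=1}|\langle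 Tf,f\rangle|$ the numerical radius. For each $\ast\in\{\mathfrak{F},\mathfrak{R},\mathcal{N}\}$, $\mathrm{AE}_\ast^{(1),p}(F)$ is the infimum of $\mathrm{AE}_\ast^{(1),p}(F,G)$ over all duals $G$ of $F$ and $\zeta_\ast^{(1),p}(F)$ is the set of duals attaining it. *)

theory Defs
  imports "HOL-Analysis.Analysis"
begin

text \<open>The n-dimensional Hilbert space H_n is modelled as complex ^ 'n with n = CARD('n).\<close>

definition cinner :: "complex ^ 'n \<Rightarrow> complex ^ 'n \<Rightarrow> complex" where
  "cinner x y = (\<Sum>i\<in>UNIV. x $ i * cnj (y $ i))"

text \<open>Frames are finite families indexed by {..<N}.\<close>

definition parseval_frame :: "nat \<Rightarrow> (nat \<Rightarrow> complex ^ 'n) \<Rightarrow> bool" where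
  "parseval_frame N F \<longleftrightarrow> (\<forall>f. (\<Sum>i<N. (cmod (cinner f (F i)))\<^sup>2) = (norm f)\<^sup>2)"

definition uniform_frame :: "nat \<Rightarrow> (nat \<Rightarrow> complex ^ 'n) \<Rightarrow> bool" where
  "uniform_frame N F \<longleftrightarrow> (\<forall>i<N. \<forall>j<N. norm (F i) = norm (F j))"

definition is_dual :: "nat \<Rightarrow> (nat \<Rightarrow> complex ^ 'n) \<Rightarrow> (nat \<Rightarrow> complex ^ 'n) \<Rightarrow> bool" where
  "is_dual N F G \<longleftrightarrow> (\<forall>f. f = (\<Sum>i<N. cinner f (F i) *s G i))"

definition err_op :: "(nat \<Rightarrow> complex ^ 'n) \<Rightarrow> (nat \<Rightarrow> complex ^ 'n) \<Rightarrow> nat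
    \<Rightarrow> complex ^ 'n \<Rightarrow> complex ^ 'n" where
  "err_op F G i = (\<lambda>f. cinner f (F i) *s G i)"

definition frob_norm :: "(complex ^ 'n \<Rightarrow> complex ^ 'n) \<Rightarrow> real" where
  "frob_norm T = sqrt (\<Sum>j\<in>UNIV. (norm (T (axis j 1)))\<^sup>2)"

definition spec_radius :: "(complex ^ 'n \<Rightarrow> complex ^ 'n) \<Rightarrow> real" where
  "spec_radius T = Sup {cmod c | c. \<exists>x. x \<noteq> 0 \<and> T x = c *s x}"

definition num_radius :: "(complex ^ 'n \<Rightarrow> complex ^ 'n) \<Rightarrow> real" where
  "num_radius T = Sup {cmod (cinner (T f) f) | f. norm f = 1}"

text \<open>Average p-error for one erasure, with respect to an operator measure \<mu>.\<close>

definition AE1 :: "((complex ^ 'n \<Rightarrow> complex ^ 'n) \<Rightarrow> real) \<Rightarrow> real \<Rightarrow> nat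
    \<Rightarrow> (nat \<Rightarrow> complex ^ 'n) \<Rightarrow> (nat \<Rightarrow> complex ^ 'n) \<Rightarrow> real" where
  "AE1 \<mu> p N F G = ((1 / real N) * (\<Sum>i<N. (\<mu> (err_op F G i)) powr p)) powr (1 / p)"

definition AE1_opt :: "((complex ^ 'n \<Rightarrow> complex ^ 'n) \<Rightarrow> real) \<Rightarrow> real \<Rightarrow> nat
    \<Rightarrow> (nat \<Rightarrow> complex ^ 'n) \<Rightarrow> real" where
  "AE1_opt \<mu> p N F = Inf {AE1 \<mu> p N F G | G. is_dual N F G}"

definition zeta1 :: "((complex ^ 'n \<Rightarrow> complex ^ 'n) \<Rightarrow> real) \<Rightarrow> real \<Rightarrow> nat
    \<Rightarrow> (nat \<Rightarrow> complex ^ 'n) \<Rightarrow> (nat \<Rightarrow> complex ^ 'n) set" where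
  "zeta1 \<mu> p N F = {G. is_dual N F G \<and> AE1 \<mu> p N F G = AE1_opt \<mu> p N F}"

end

theory Submission
  imports Defs
begin

lemma norm_sq_vec: "(norm (x::complex^'n))\<^sup>2 = (\<Sum>i\<in>UNIV. (cmod (x$i))\<^sup>2)"
  unfolding norm_vec_def L2_set_def by (simp add: sum_nonneg)

lemma cinner_self: "cinner x x = of_real ((norm x)\<^sup>2)"
  unfolding cinner_def norm_sq_vec of_real_sum complex_norm_square by simp

lemma norm_smult_c: "norm (c *s (x::complex^'n)) = cmod c * norm x"
  unfolding norm_vec_def L2_set_def
  by (simp add: norm_mult power_mult_distrib sum_distrib_left[symmetric] real_sqrt_mult)

lemma norm_axis_c: "norm (axis j (1::complex) :: complex^'n) = 1"
proof -
  have "(norm (axis j (1::complex) :: complex^'n))\<^sup>2 = 1"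
    unfolding norm_sq_vec axis_def
  proof -
    have "\<And>i. (cmod (vec_lambda (\<lambda>k. if k = j then 1 else 0) $ i))\<^sup>2 = (if i = j then 1 else 0)" by simp
    then show "(\<Sum>i\<in>UNIV. (cmod (vec_lambda (\<lambda>k. if k = j then (1::complex) else 0) $ i))\<^sup>2) = 1"
      by (simp add: sum.delta)
  qed
  then show ?thesis by (simp add: power2_eq_1_iff)
qed

lemma axis_nz: "axis j (1::complex) \<noteq> (0::complex^'n)"
  using norm_axis_c[of j] by (metis norm_zero zero_neq_one)

lemma cinner_axis_left: "cinner (axis j 1) (y::complex^'n) = cnj (y $ j)"
  proof -
  have "\<And>i. (axis j 1 :: complex^'n) $ i * cnj (y $ i) = (if i = j then cnj (y $ j) else 0)"
    by (simp add: axis_def)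
  then show ?thesis unfolding cinner_def by (simp add: sum.delta)
qed

lemma cinner_axis_right: "cinner (x::complex^'n) (axis j 1) = x $ j"
  proof -
  have "\<And>i. x $ i * cnj ((axis j 1 :: complex^'n) $ i) = (if i = j then x $ j else 0)"
    by (simp add: axis_def)
  then show ?thesis unfolding cinner_def by (simp add: sum.delta)
qed

lemma cinner_add_left: "cinner (x + y) z = cinner x z + cinner y z"
  unfolding cinner_def by (simp add: distrib_right sum.distrib)

lemma cinner_add_right: "cinner x (y + z) = cinner x y + cinner x z"
  unfolding cinner_def by (simp add: distrib_left sum.distrib)

lemma cinner_smult_left: "cinner (c *s x) y = c * cinner x y"
  unfolding cinner_def by (simp add: sum_distrib_left mult.assoc)

lemma cinner_smult_right: "cinner x (c *s y) = cnj c * cinner x y"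
  unfolding cinner_def by (simp add: sum_distrib_left algebra_simps)

lemma cinner_zero_left [simp]: "cinner 0 y = 0"
  unfolding cinner_def by simp

lemma cinner_cnj: "cnj (cinner x y) = cinner y x"
  unfolding cinner_def by (simp add: mult.commute)

lemma cinner_CS: "cmod (cinner x y) \<le> norm x * norm y"
proof -
  have "cmod (cinner x y) \<le> (\<Sum>i\<in>UNIV. cmod (x$i) * cmod (y$i))"
    unfolding cinner_def by (rule order.trans[OF norm_sum]) (simp add: norm_mult)
  also have "\<dots> \<le> L2_set (\<lambda>i. cmod (x$i)) UNIV * L2_set (\<lambda>i. cmod (y$i)) UNIV"
    using L2_set_mult_ineq[of "\<lambda>i. cmod (x$i)" "\<lambda>i. cmod (y$i)" UNIV] by simp
  finally show ?thesis unfolding norm_vec_def .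
qed

lemma powr_convex0:
  assumes "p \<ge> 1" shows "convex_on {0..} (\<lambda>x::real. x powr p)"
  unfolding convex_on_def
proof (intro conjI ballI allI impI)
  show "convex {0::real..}" by simp
  fix x y u v :: real assume x: "x \<in> {0..}" and y: "y \<in> {0..}" and u: "u \<ge> 0" and v: "v \<ge> 0" and uv: "u + v = 1"
  have pc: "convex_on {0<..} (\<lambda>x::real. x powr p)" using powr_convex assms by blast
  have aux: "t powr p \<le> t" if "0 \<le> t" "t \<le> 1" for t :: real
    using that assms using powr_mono'[of 1 p t] by simp
  show "(u *\<^sub>R x + v *\<^sub>R y) powr p \<le> u * x powr p + v * y powr p"
  proof (cases "x = 0")
    case True
    then show ?thesis proof -
      have "v powr p \<le> v" using aux[of v] v u uv by linarith
      then have "v powr p * y powr p \<le> v * y powr p" by (rule mult_right_mono) simp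
      then show ?thesis using True y v by (simp add: powr_mult)
    qed
  next
    case xn: False
    show ?thesis
    proof (cases "y = 0")
      case True
      then show ?thesis proof -
        have "u powr p \<le> u" using aux[of u] v u uv by linarith
        then have "u powr p * x powr p \<le> u * x powr p" by (rule mult_right_mono) simp
        then show ?thesis using True x u by (simp add: powr_mult)
      qed
    next
      case False
      then show ?thesis using pc xn x y u v uv unfolding convex_on_def by auto
    qed
  qed
qed

lemma frob_rank1: "frob_norm (\<lambda>x. cinner x f *s g) = norm f * norm (g::complex^'n)"
proof -
  have "(\<Sum>j\<in>UNIV. (norm (cinner (axis j 1) f *s g))\<^sup>2) = (norm g)\<^sup>2 * (norm f)\<^sup>2"
    unfolding cinner_axis_left norm_smult_c norm_sq_vec[of f]
    by (simp add: power_mult_distrib sum_distrib_left mult.commute)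
  then show ?thesis unfolding frob_norm_def
    by (simp add: real_sqrt_mult power_mult_distrib[symmetric] mult.commute)
qed

lemma spec_set_bdd:
  assumes "x \<noteq> 0" "cinner x f *s g = c *s x"
  shows "cmod c \<le> norm f * norm (g::complex^'n)"
proof -
  have "cmod c * norm x = cmod (cinner x f) * norm g"
    using assms(2) by (metis norm_smult_c)
  also have "\<dots> \<le> norm x * norm f * norm g"
    using cinner_CS[of x f] by (simp add: mult_right_mono)
  finally have "cmod c * norm x \<le> (norm f * norm g) * norm x" by (simp add: algebra_simps)
  then show ?thesis using assms(1) by simp
qed

lemma spec_mem:
  "cmod (cinner g f) \<in> {cmod c | c. \<exists>x. x \<noteq> 0 \<and> cinner x f *s g = c *s (x::complex^'n)}"
proof (cases "cinner g f = 0")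
  case True
  show ?thesis
  proof (cases "g = 0")
    case True
    have "(axis undefined 1 :: complex^'n) \<noteq> 0" by (rule axis_nz)
    then show ?thesis using \<open>cinner g f = 0\<close> \<open>g = 0\<close>
      by (auto intro!: exI[of _ 0] exI[of _ "axis undefined 1"])
  next
    case False
    then show ?thesis using \<open>cinner g f = 0\<close> by (auto intro!: exI[of _ 0] exI[of _ g])
  qed
next
  case False
  then have "g \<noteq> 0" by auto
  then show ?thesis by (auto intro!: exI[of _ "cinner g f"] exI[of _ g])
qed

lemma spec_lower: "cmod (cinner g f) \<le> spec_radius (\<lambda>x. cinner x f *s (g::complex^'n))"
  unfolding spec_radius_def
  by (rule cSup_upper[OF spec_mem]) (auto simp: bdd_above_def intro: spec_set_bdd)

lemma spec_self: "spec_radius (\<lambda>x. cinner x f *s (f::complex^'n)) = (norm f)\<^sup>2"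
  unfolding spec_radius_def
proof (rule cSup_eq_maximum)
  show "(norm f)\<^sup>2 \<in> {cmod c | c. \<exists>x. x \<noteq> 0 \<and> cinner x f *s f = c *s x}"
    using spec_mem[of f f] by (simp add: cinner_self norm_power)
  show "y \<le> (norm f)\<^sup>2" if "y \<in> {cmod c | c. \<exists>x. x \<noteq> 0 \<and> cinner x f *s f = c *s x}" for y
    using that spec_set_bdd[of _ f f] by (auto simp: power2_eq_square)
qed

lemma num_bdd: "norm x = 1 \<Longrightarrow> cmod (cinner (cinner x f *s g) x) \<le> norm f * norm (g::complex^'n)"
  unfolding cinner_smult_left norm_mult
  using cinner_CS[of x f] cinner_CS[of g x]
  by (simp add: mult_mono)


lemma num_mem:
  "cmod (cinner g f) \<in> {cmod (cinner ((\<lambda>x. cinner x f *s g) x) x) | x. norm (x::complex^'n) = 1}"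
proof (cases "g = 0")
  case True
  have "norm (axis undefined 1 :: complex^'n) = 1" by (rule norm_axis_c)
  then show ?thesis using True unfolding cinner_smult_left
    by (auto intro!: exI[of _ "axis undefined 1"])
next
  case False
  define x where "x = complex_of_real (1 / norm g) *s g"
  have nx: "norm x = 1" using False unfolding x_def norm_smult_c by (simp add: norm_divide)
  have "cinner (cinner x f *s g) x = cinner g f"
    using False unfolding x_def cinner_smult_left cinner_smult_right cinner_self
    by (simp add: field_simps power2_eq_square)
  then show ?thesis using nx by (auto intro!: exI[of _ x])
qed

lemma num_lower: "cmod (cinner g f) \<le> num_radius (\<lambda>x. cinner x f *s (g::complex^'n))"
  unfolding num_radius_def
  by (rule cSup_upper[OF num_mem]) (auto simp: bdd_above_def intro: num_bdd)

lemma num_self: "num_radius (\<lambda>x. cinner x f *s (f::complex^'n)) = (norm f)\<^sup>2"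
  unfolding num_radius_def
proof (rule cSup_eq_maximum)
  show "(norm f)\<^sup>2 \<in> {cmod (cinner ((\<lambda>x. cinner x f *s f) x) x) | x. norm x = 1}"
    using num_mem[of f f] by (simp add: cinner_self norm_power)
  show "y \<le> (norm f)\<^sup>2" if "y \<in> {cmod (cinner ((\<lambda>x. cinner x f *s f) x) x) | x. norm x = 1}" for y
    using that num_bdd[of _ f f] by (auto simp: power2_eq_square)
qed


lemma power_mean:
  fixes a :: "nat \<Rightarrow> real"
  assumes "finite S" "S \<noteq> {}" "\<And>i. i \<in> S \<Longrightarrow> a i \<ge> 0" "p \<ge> 1"
  shows "sum a S / card S \<le> ((1 / card S) * (\<Sum>i\<in>S. a i powr p)) powr (1 / p)"
proof -
  have c: "card S > 0" using assms by (simp add: card_gt_0_iff)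
  have "(\<Sum>i\<in>S. (1 / card S) *\<^sub>R a i) powr p \<le> (\<Sum>i\<in>S. (1 / card S) * a i powr p)"
    by (rule convex_on_sum[OF assms(1,2) powr_convex0[OF assms(4)]]) (use assms c in auto)
  then have m: "(sum a S / card S) powr p \<le> (1 / card S) * (\<Sum>i\<in>S. a i powr p)"
    by (simp add: sum_distrib_left[symmetric] sum_divide_distrib[symmetric])
  have nn: "sum a S / card S \<ge> 0" using assms by (simp add: sum_nonneg)
  have "sum a S \<ge> 0" using assms by (simp add: sum_nonneg)
  then have "sum a S / card S = ((sum a S / card S) powr p) powr (1 / p)"
    using nn assms(4) by (simp add: powr_powr)
  also have "\<dots> \<le> ((1 / card S) * (\<Sum>i\<in>S. a i powr p)) powr (1 / p)"
    by (rule powr_mono2) (use m assms(4) in auto)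
  finally show ?thesis .
qed

lemma parseval_dual:
  assumes "parseval_frame N F"
  shows "is_dual N F F"
proof -
  define B where "B f g = (\<Sum>i<N. cinner f (F i) * cnj (cinner g (F i))) - cinner f g" for f g
  have B0: "B f f = 0" for f
  proof -
    have "(\<Sum>i<N. (cmod (cinner f (F i)))\<^sup>2) = (norm f)\<^sup>2" using assms unfolding parseval_frame_def by blast
    then have "complex_of_real (\<Sum>i<N. (cmod (cinner f (F i)))\<^sup>2) = complex_of_real ((norm f)\<^sup>2)" by simp
    then show ?thesis unfolding B_def cinner_self of_real_sum complex_norm_square by simp
  qed
  have Badd1: "B (f + g) h = B f h + B g h" for f g h
    unfolding B_def cinner_add_left by (simp add: algebra_simps sum.distrib)
  have Badd2: "B h (f + g) = B h f + B h g" for f g h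
    unfolding B_def cinner_add_left cinner_add_right by (simp add: algebra_simps sum.distrib)
  have Bsm1: "B (c *s f) g = c * B f g" for c f g
    unfolding B_def cinner_smult_left by (simp add: algebra_simps sum_distrib_left)
  have Bsm2: "B g (c *s f) = cnj c * B g f" for c f g
    unfolding B_def cinner_smult_right cinner_smult_left by (simp add: algebra_simps sum_distrib_left)
  have Bz: "B f g = 0" for f g
  proof -
    have "B (f + g) (f + g) = B f f + B f g + (B g f + B g g)" by (simp add: Badd1 Badd2)
    then have e1: "B f g + B g f = 0" using B0[of "f+g"] B0[of f] B0[of g] by simp
    have "B (f + \<i> *s g) (f + \<i> *s g) = B f f + cnj \<i> * B f g + (\<i> * B g f + \<i> * (cnj \<i> * B g g))"
      by (simp add: Badd1 Badd2 Bsm1 Bsm2 algebra_simps)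
    then have e2: "- \<i> * B f g + \<i> * B g f = 0" using B0[of "f + \<i> *s g"] B0[of f] B0[of g] by simp
    from e1 e2 show ?thesis by (simp add: algebra_simps)
  qed
  show ?thesis unfolding is_dual_def
  proof (intro allI)
    fix f :: "complex^'a"
    show "f = (\<Sum>i<N. cinner f (F i) *s F i)"
    unfolding vec_eq_iff
    proof
      fix j
      have "B f (axis j 1) = 0" by (rule Bz)
      then show "f $ j = (\<Sum>i<N. cinner f (F i) *s F i) $ j"
        unfolding B_def cinner_axis_left cinner_axis_right by simp
    qed
  qed
qed

lemma dual_trace:
  assumes "is_dual N F (G :: nat \<Rightarrow> complex^'n)"
  shows "(\<Sum>i<N. cinner (G i) (F i)) = of_nat CARD('n)"
proof -
  have "1 = (\<Sum>i<N. cnj (F i $ j) * G i $ j)" for j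
  proof -
    have "axis j 1 = (\<Sum>i<N. cinner (axis j 1) (F i) *s G i)" using assms unfolding is_dual_def by blast
    then have "(axis j 1 :: complex^'n) $ j = (\<Sum>i<N. cinner (axis j 1) (F i) *s G i) $ j" by simp
    then show ?thesis unfolding cinner_axis_left by simp
  qed
  then have "of_nat CARD('n) = (\<Sum>j\<in>UNIV. \<Sum>i<N. cnj (F i $ j) * G i $ j)" by simp
  also have "\<dots> = (\<Sum>i<N. cinner (G i) (F i))"
    unfolding cinner_def by (subst sum.swap) (simp add: mult.commute)
  finally show ?thesis by simp
qed


lemma generic:
  fixes F :: "nat \<Rightarrow> complex ^ 'n" and N :: nat and p :: real
    and \<mu> :: "(complex ^ 'n \<Rightarrow> complex ^ 'n) \<Rightarrow> real"
  assumes par: "parseval_frame N F" and uni: "uniform_frame N F" and p: "p > 1"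
    and P1: "\<And>f g. cmod (cinner g f) \<le> \<mu> (\<lambda>x. cinner x f *s g)"
    and P2: "\<And>f. f \<noteq> 0 \<Longrightarrow> \<mu> (\<lambda>x. cinner x f *s f) = (norm f)\<^sup>2"
  shows "F \<in> zeta1 \<mu> p N F \<and> AE1_opt \<mu> p N F = real CARD('n) / real N"
proof -
  have dF: "is_dual N F F" by (rule parseval_dual[OF par])
  have Npos: "N > 0"
  proof (rule ccontr)
    assume "\<not> N > 0"
    then have "N = 0" by simp
    have "(\<Sum>i<N. (cmod (cinner (axis undefined 1 :: complex^'n) (F i)))\<^sup>2) = (norm (axis undefined 1 :: complex^'n))\<^sup>2"
      using par unfolding parseval_frame_def by blast
    then show False using \<open>N = 0\<close> norm_axis_c by simp
  qed
  have tr: "(\<Sum>i<N. (norm (F i))\<^sup>2) = real CARD('n)"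
  proof -
    have "(\<Sum>i<N. cinner (F i) (F i)) = of_nat CARD('n)" by (rule dual_trace[OF dF])
    then have "complex_of_real (\<Sum>i<N. (norm (F i))\<^sup>2) = complex_of_real (real CARD('n))"
      unfolding cinner_self of_real_sum by simp
    then show ?thesis using of_real_eq_iff by blast
  qed
  have nF: "(norm (F i))\<^sup>2 = real CARD('n) / real N" if "i < N" for i
  proof -
    have eq: "norm (F k) = norm (F i)" if "k < N" for k
      using uni \<open>i < N\<close> \<open>k < N\<close> unfolding uniform_frame_def by blast
    have "(\<Sum>k<N. (norm (F k))\<^sup>2) = (\<Sum>k<N. (norm (F i))\<^sup>2)"
      using eq by (intro sum.cong) auto
    then have "real N * (norm (F i))\<^sup>2 = real CARD('n)" using tr by simp
    then show ?thesis using Npos by (simp add: field_simps)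
  qed
  have Fnz: "F i \<noteq> 0" if "i < N" for i
    using nF[OF that] Npos by auto
  define c where "c = real CARD('n) / real N"
  have cpos: "c > 0" using Npos unfolding c_def by simp
  have AEF: "AE1 \<mu> p N F F = c"
  proof -
    have "(\<Sum>i<N. (\<mu> (err_op F F i)) powr p) = (\<Sum>i<N. c powr p)"
      unfolding err_op_def using P2 Fnz nF c_def by (intro sum.cong) auto
    then have "AE1 \<mu> p N F F = (c powr p) powr (1 / p)"
      unfolding AE1_def using Npos by simp
    also have "\<dots> = c" using cpos p by (simp add: powr_powr)
    finally show ?thesis .
  qed
  have low: "c \<le> AE1 \<mu> p N F G" if dG: "is_dual N F G" for G
  proof -
    define a where "a i = \<mu> (err_op F G i)" for i
    have a_ge: "cmod (cinner (G i) (F i)) \<le> a i" for i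
      unfolding a_def err_op_def by (rule P1)
    have a_nn: "a i \<ge> 0" for i using a_ge[of i] norm_ge_zero[of "cinner (G i) (F i)"] by linarith
    have "real CARD('n) = cmod (\<Sum>i<N. cinner (G i) (F i))"
      using dual_trace[OF dG] by simp
    also have "\<dots> \<le> (\<Sum>i<N. cmod (cinner (G i) (F i)))" by (rule norm_sum)
    also have "\<dots> \<le> sum a {..<N}" by (rule sum_mono) (rule a_ge)
    finally have s: "real CARD('n) \<le> sum a {..<N}" .
    have "c \<le> sum a {..<N} / card {..<N}"
      unfolding c_def using s Npos by (simp add: divide_right_mono)
    also have "\<dots> \<le> ((1 / card {..<N}) * (\<Sum>i\<in>{..<N}. a i powr p)) powr (1 / p)"
      by (rule power_mean) (use Npos a_nn p in auto)
    also have "\<dots> = AE1 \<mu> p N F G" unfolding AE1_def a_def by simp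
    finally show ?thesis .
  qed
  have opt: "AE1_opt \<mu> p N F = c"
    unfolding AE1_opt_def
  proof (rule cInf_eq_minimum)
    show "c \<in> {AE1 \<mu> p N F G | G. is_dual N F G}" using AEF dF by auto
    show "c \<le> x" if "x \<in> {AE1 \<mu> p N F G | G. is_dual N F G}" for x
      using that low by auto
  qed
  show ?thesis unfolding zeta1_def using opt AEF dF c_def by auto
qed

lemma part_f:
  fixes F :: "nat \<Rightarrow> complex ^ 'n" and N :: nat and p :: real
  assumes "parseval_frame N F" and "uniform_frame N F" and "p > 1"
  shows "F \<in> zeta1 frob_norm p N F \<and> AE1_opt frob_norm p N F = real CARD('n) / real N"
proof (rule generic[where \<mu> = frob_norm, OF assms])
  show "cmod (cinner g f) \<le> frob_norm (\<lambda>x. cinner x f *s g)" for f g :: "complex^'n"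
    unfolding frob_rank1 using cinner_CS[of g f] by (simp add: mult.commute)
  show "frob_norm (\<lambda>x. cinner x f *s f) = (norm f)\<^sup>2" for f :: "complex^'n"
    unfolding frob_rank1 by (simp add: power2_eq_square)
qed

lemma part_s:
  fixes F :: "nat \<Rightarrow> complex ^ 'n" and N :: nat and p :: real
  assumes "parseval_frame N F" and "uniform_frame N F" and "p > 1"
  shows "F \<in> zeta1 spec_radius p N F \<and> AE1_opt spec_radius p N F = real CARD('n) / real N"
proof (rule generic[where \<mu> = spec_radius, OF assms])
  show "cmod (cinner g f) \<le> spec_radius (\<lambda>x. cinner x f *s g)" for f g :: "complex^'n"
    by (rule spec_lower)
  show "spec_radius (\<lambda>x. cinner x f *s f) = (norm f)\<^sup>2" for f :: "complex^'n"
    by (rule spec_self)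
qed

lemma part_n:
  fixes F :: "nat \<Rightarrow> complex ^ 'n" and N :: nat and p :: real
  assumes "parseval_frame N F" and "uniform_frame N F" and "p > 1"
  shows "F \<in> zeta1 num_radius p N F \<and> AE1_opt num_radius p N F = real CARD('n) / real N"
proof (rule generic[where \<mu> = num_radius, OF assms])
  show "cmod (cinner g f) \<le> num_radius (\<lambda>x. cinner x f *s g)" for f g :: "complex^'n"
    by (rule num_lower)
  show "num_radius (\<lambda>x. cinner x f *s f) = (norm f)\<^sup>2" for f :: "complex^'n"
    by (rule num_self)
qed

theorem proposition5p8:
  fixes F :: "nat \<Rightarrow> complex ^ 'n" and N :: nat and p :: real
  assumes "parseval_frame N F" and "uniform_frame N F" and "p > 1"
  shows "F \<in> zeta1 frob_norm p N F \<inter> zeta1 spec_radius p N F \<inter> zeta1 num_radius p N F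
    \<and> AE1_opt frob_norm p N F = real CARD('n) / real N
    \<and> AE1_opt spec_radius p N F = real CARD('n) / real N
    \<and> AE1_opt num_radius p N F = real CARD('n) / real N"
proof -
  note f = part_f[OF assms] and s = part_s[OF assms] and n = part_n[OF assms]
  have "F \<in> zeta1 frob_norm p N F \<inter> zeta1 spec_radius p N F \<inter> zeta1 num_radius p N F"
    using f s n by (intro IntI) simp_all
  then show ?thesis using f s n by (intro conjI) simp_all
qed

end
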